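(* Let $n,q,L$ be positive integers and $r\in[0,1)$ with $rn\in\mathbb{N}$. Let $V=\bigcup_{i=1}^n V_i$ with $V_i=\{(i,a):a\in[q]\}$, and let $H=(V,E)$ be an $n$-uniform $n$-partite hypergraph with these parts which is $(n+(L+1)rn,\,L+1)$-sparse. Then the code $C_H=\{\psi(e):e\in E\}\subseteq[q]^n$ is $(r,L)$ list-decodable.
   Context: A hypergraph is $n$-uniform if all edges have size $n$; $n$-partite with parts $V_1,\dots,V_n$ if every edge meets each $V_i$ in exactly one vertex. For an edge $e=\{(i,x_i):i\in[n]\}$, $\psi(e)=(x_1,\dots,x_n)\in[q]^n$. An $n$-uniform hypergraph is $(v,e)$-sparse if any $e$ distinct edges $A_1,\dots,A_e$ satisfy $|\bigcup_{i=1}^e A_i|>v$. A code $C\subseteq[q]^n$ is $(r,L)$ list-decodable if every Hamming ball of radius $rn$ in $[q]^n$ contains at most $L$ codewords. *)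

theory Defs
  imports Complex_Main
begin

definition part :: "nat \<Rightarrow> nat \<Rightarrow> (nat \<times> nat) set" where
  "part q i = {(i, a) | a. a \<in> {1..q}}"

definition vertices :: "nat \<Rightarrow> nat \<Rightarrow> (nat \<times> nat) set" where
  "vertices n q = (\<Union>i\<in>{1..n}. part q i)"

definition uniform_partite :: "nat \<Rightarrow> nat \<Rightarrow> (nat \<times> nat) set set \<Rightarrow> bool" where
  "uniform_partite n q E \<longleftrightarrow>
     (\<forall>e\<in>E. e \<subseteq> vertices n q \<and> card e = n \<and>
        (\<forall>i\<in>{1..n}. card (e \<inter> part q i) = 1))"

definition sparse :: "real \<Rightarrow> nat \<Rightarrow> (nat \<times> nat) set set \<Rightarrow> bool" where
  "sparse v k E \<longleftrightarrow> (\<forall>F\<subseteq>E. card F = k \<longrightarrow> real (card (\<Union>F)) > v)"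

text \<open>Words of [q]^n as functions on {1..n}, extended by 0 outside.\<close>
definition words :: "nat \<Rightarrow> nat \<Rightarrow> (nat \<Rightarrow> nat) set" where
  "words n q = {x. (\<forall>i\<in>{1..n}. x i \<in> {1..q}) \<and> (\<forall>i. i \<notin> {1..n} \<longrightarrow> x i = 0)}"

definition psi :: "nat \<Rightarrow> (nat \<times> nat) set \<Rightarrow> (nat \<Rightarrow> nat)" where
  "psi n e = (\<lambda>i. if i \<in> {1..n} then (THE a. (i, a) \<in> e) else 0)"

definition hamming :: "nat \<Rightarrow> (nat \<Rightarrow> nat) \<Rightarrow> (nat \<Rightarrow> nat) \<Rightarrow> nat" where
  "hamming n x y = card {i\<in>{1..n}. x i \<noteq> y i}"

definition list_decodable :: "nat \<Rightarrow> nat \<Rightarrow> real \<Rightarrow> nat \<Rightarrow> (nat \<Rightarrow> nat) set \<Rightarrow> bool" where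
  "list_decodable n q r L C \<longleftrightarrow>
     (\<forall>y\<in>words n q. card {c\<in>C. real (hamming n c y) \<le> r * real n} \<le> L)"

end

theory Submission
  imports Defs
begin

lemma edge_char:
  assumes "uniform_partite n q E" "e \<in> E"
  shows "(i,a) \<in> e \<longleftrightarrow> i \<in> {1..n} \<and> a = psi n e i"
proof -
  have sub: "e \<subseteq> vertices n q" and c1: "\<And>i. i\<in>{1..n} \<Longrightarrow> card (e \<inter> part q i) = 1"
    using assms unfolding uniform_partite_def by auto
  have inV: "(i,a) \<in> e \<Longrightarrow> i \<in> {1..n}" for i a
    using sub unfolding vertices_def part_def by auto
  have uniq: "\<exists>!a. (i,a) \<in> e" if ii: "i \<in> {1..n}" for i
  proof -
    obtain x where x: "e \<inter> part q i = {x}" using card_1_singletonE[OF c1[OF ii]] by blast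
    have "x \<in> part q i" using x by auto
    then obtain b where b: "x = (i,b)" unfolding part_def by auto
    have "(i,b) \<in> e" using x b by auto
    moreover have "(i,a') \<in> e \<Longrightarrow> a' = b" for a'
    proof -
      assume h: "(i,a') \<in> e"
      then have "(i,a') \<in> vertices n q" using sub by auto
      then have "(i,a') \<in> part q i" unfolding vertices_def part_def by auto
      then have "(i,a') \<in> e \<inter> part q i" using h by auto
      then show ?thesis using x b by auto
    qed
    ultimately show ?thesis by blast
  qed
  show ?thesis
  proof
    assume h: "(i,a) \<in> e"
    then have i: "i \<in> {1..n}" by (rule inV)
    have "psi n e i = (THE a. (i,a) \<in> e)" using i unfolding psi_def by simp
    also have "\<dots> = a" by (rule the1_equality[OF uniq[OF i] h])
    finally show "i \<in> {1..n} \<and> a = psi n e i" using i by simp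
  next
    assume h: "i \<in> {1..n} \<and> a = psi n e i"
    then have ae: "a = (THE a. (i,a) \<in> e)" unfolding psi_def by simp
    have "(i, THE a. (i,a) \<in> e) \<in> e" using theI'[OF uniq] h by blast
    then show "(i,a) \<in> e" using ae by simp
  qed
qed

theorem lemma4p5:
  fixes n q L :: nat and r :: real and E :: "(nat \<times> nat) set set"
  assumes "n > 0" and "q > 0" and "L > 0"
    and "0 \<le> r" and "r < 1"
    and "\<exists>k::nat. r * real n = real k"
    and "uniform_partite n q E"
    and "sparse (real n + real (L + 1) * r * real n) (L + 1) E"
  shows "list_decodable n q r L (psi n ` E)"
  unfolding list_decodable_def
proof (rule ballI, rule ccontr)
  fix y assume y: "y \<in> words n q"
  define S where "S = {c \<in> psi n ` E. real (hamming n c y) \<le> r * real n}"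
  assume "\<not> card {c \<in> psi n ` E. real (hamming n c y) \<le> r * real n} \<le> L"
  then have "L + 1 \<le> card S" unfolding S_def by simp
  then obtain T where T: "T \<subseteq> S" "card T = L + 1" and finT: "finite T" by (rule obtain_subset_with_card_n)
  have "\<forall>c\<in>T. \<exists>e\<in>E. psi n e = c" using T(1) unfolding S_def by auto
  then obtain g where g0: "\<forall>c\<in>T. g c \<in> E \<and> psi n (g c) = c" using bchoice[of T "\<lambda>c e. e \<in> E \<and> psi n e = c"] by blast
  have g: "\<And>c. c \<in> T \<Longrightarrow> g c \<in> E \<and> psi n (g c) = c" using g0 by blast
  have inj: "inj_on g T" proof (rule inj_onI) fix a b assume "a \<in> T" "b \<in> T" "g a = g b" then have "psi n (g a) = psi n (g b)" by simp then show "a = b" using g \<open>a \<in> T\<close> \<open>b \<in> T\<close> by simp qed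
  define F where "F = g ` T"
  have cF: "card F = L + 1" unfolding F_def using card_image[OF inj] T(2) by simp
  have FE: "F \<subseteq> E" unfolding F_def using g by auto
  define Y where "Y = (\<lambda>i. (i, y i)) ` {1..n}"
  define B where "B c = (\<lambda>i. (i, c i)) ` {i\<in>{1..n}. c i \<noteq> y i}" for c :: "nat \<Rightarrow> nat"
  have sub: "\<Union>F \<subseteq> Y \<union> (\<Union>c\<in>T. B c)"
  proof
    fix x assume "x \<in> \<Union>F"
    then obtain c where c: "c \<in> T" "x \<in> g c" unfolding F_def by auto
    obtain i a where x: "x = (i,a)" by (cases x) blast
    have "i \<in> {1..n} \<and> a = psi n (g c) i"
      using edge_char[OF assms(7), of "g c" i a] g[OF c(1)] c(2) x by simp
    then have ia: "i \<in> {1..n}" "a = c i" using g[OF c(1)] by auto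
    show "x \<in> Y \<union> (\<Union>c\<in>T. B c)"
    proof (cases "c i = y i")
      case True then show ?thesis using ia x unfolding Y_def by auto
    next
      case False then show ?thesis using ia x c(1) unfolding B_def by blast
    qed
  qed
  have cB: "real (card (B c)) \<le> r * real n" if "c \<in> T" for c
  proof -
    have "card (B c) \<le> card {i\<in>{1..n}. c i \<noteq> y i}" unfolding B_def by (rule card_image_le) simp
    also have "\<dots> = hamming n c y" unfolding hamming_def by simp
    finally show ?thesis using that T(1) unfolding S_def by auto
  qed
  have finB: "finite (B c)" for c unfolding B_def by simp
  have "card (\<Union>F) \<le> card (Y \<union> (\<Union>c\<in>T. B c))"
    by (rule card_mono[OF _ sub]) (simp add: Y_def finT finB)
  also have "\<dots> \<le> card Y + card (\<Union>c\<in>T. B c)" by (rule card_Un_le)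
  also have "\<dots> \<le> n + (\<Sum>c\<in>T. card (B c))"
    using card_UN_le[OF finT, of B] card_image_le[of "{1..n}" "\<lambda>i. (i, y i)"] unfolding Y_def by simp
  finally have "real (card (\<Union>F)) \<le> real (n + (\<Sum>c\<in>T. card (B c)))"
    by (simp only: of_nat_le_iff)
  also have "\<dots> = real n + (\<Sum>c\<in>T. real (card (B c)))" by simp
  also have "\<dots> \<le> real n + (\<Sum>c\<in>T. r * real n)"
    using sum_mono[of T "\<lambda>c. real (card (B c))" "\<lambda>c. r * real n"] cB by simp
  also have "\<dots> = real n + real (L + 1) * r * real n" using T(2) by simp
  finally have le: "real (card (\<Union>F)) \<le> real n + real (L + 1) * r * real n" .
  have "real (card (\<Union>F)) > real n + real (L + 1) * r * real n"
    using assms(8) FE cF unfolding sparse_def by blast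
  with le show False by simp
qed

end
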